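(* Suppose that $G = \left( \begin{bmatrix} m & k \end{bmatrix}, \eta, u \right)$ is a conditional of $F= \left( \begin{bmatrix} f \\ g \end{bmatrix}, \begin{bmatrix} \alpha & \beta \\ \beta^\dagger & \delta \end{bmatrix}, \begin{bmatrix} s \\ t \end{bmatrix} \right)$. Then the following equalities hold: \begin{align*} k = g - m \circ f &\quad & m \circ \alpha = \beta^\dagger &\quad & \eta = \delta - m \circ \beta &\quad & u = t - m\circ s \end{align*}
   Context: Let $(\mathbb{X}, \dagger)$ be a dagger additive category (a dagger category enriched in abelian groups with additive dagger and finite biproducts satisfying $\pi_j^\dagger = \iota_j$; maps between biproducts are written as matrices and the dagger acts as conjugate transpose) and fix an object $X$. A map $p$ is $\dagger$-positive if $p = \phi^\dagger \circ \phi$ for some $\phi$. The Gauss construction $\mathfrak{G}\left[ (\mathbb{X}, \dagger) \right]_X$ is the Markov category with the objects of $\mathbb{X}$, maps $A \to B$ the triples $(f,p,x)$ with $f: A \to B$, $p: B \to B$ $\dagger$-positive, $x: X \to B$; identities $(\mathsf{id}_A,0,0)$; composition $(g,q,y) \circ (f,p,x) = (g \circ f, q + g \circ p \circ g^\dagger, y + g \circ x)$; $A \otimes B = A \oplus B$, $(f,p,x) \otimes (g,q,y) = \left(f \oplus g, p \oplus q, \begin{bmatrix} x \\ y \end{bmatrix}\right)$; identity maps $\mathsf{Id}_A = (\mathsf{id}_A,0,0)$, copy $\mathsf{copy}_A = \left(\begin{bmatrix} \mathsf{id}_A \\ \mathsf{id}_A \end{bmatrix}, 0, 0\right)$, delete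 $\mathsf{del}_A = (0,0,0): A \to \mathsf{0}$. Here $F: A \to B \otimes C$ is a map of $\mathfrak{G}\left[ (\mathbb{X}, \dagger) \right]_X$ with $f: A \to B$, $g: A \to C$, $\alpha: B \to B$, $\beta: C \to B$, $\delta: C \to C$, $s: X \to B$, $t: X \to C$ (the second component is $\dagger$-positive, which forces its lower-left entry to be $\beta^\dagger$), and $G: B \otimes A \to C$ has $m: B \to C$, $k: A \to C$, $\eta: C \to C$ $\dagger$-positive, $u: X \to C$. $G$ is a conditional of $F$ if $(\mathsf{Id}_B \otimes G) \circ (\mathsf{copy}_B \otimes \mathsf{Id}_A) \circ (\mathsf{Id}_B \otimes \mathsf{del}_C \otimes \mathsf{Id}_A) \circ (F \otimes \mathsf{Id}_A) \circ \mathsf{copy}_A = F$. *)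

theory Defs
  imports Main
begin

text \<open>A dagger additive category, presented with explicit hom-sets.
  cmp g f is the composite g after f; add/neg/zero give the abelian group
  enrichment; bip A B is the chosen biproduct A (+) B with projections p1, p2
  and injections i1, i2; zobj is the zero object (empty biproduct).\<close>

record ('o, 'm) dacat =
  hom :: "'o \<Rightarrow> 'o \<Rightarrow> 'm set"
  cmp :: "'m \<Rightarrow> 'm \<Rightarrow> 'm"
  idm :: "'o \<Rightarrow> 'm"
  zero :: "'o \<Rightarrow> 'o \<Rightarrow> 'm"
  add :: "'m \<Rightarrow> 'm \<Rightarrow> 'm"
  neg :: "'m \<Rightarrow> 'm"
  dag :: "'m \<Rightarrow> 'm"
  bip :: "'o \<Rightarrow> 'o \<Rightarrow> 'o"
  p1 :: "'o \<Rightarrow> 'o \<Rightarrow> 'm"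
  p2 :: "'o \<Rightarrow> 'o \<Rightarrow> 'm"
  i1 :: "'o \<Rightarrow> 'o \<Rightarrow> 'm"
  i2 :: "'o \<Rightarrow> 'o \<Rightarrow> 'm"
  zobj :: 'o

locale dagger_additive =
  fixes K :: "('o, 'm) dacat"
  assumes cmp_hom: "\<lbrakk>f \<in> hom K A B; g \<in> hom K B C\<rbrakk> \<Longrightarrow> cmp K g f \<in> hom K A C"
    and cmp_assoc: "\<lbrakk>f \<in> hom K A B; g \<in> hom K B C; h \<in> hom K C D\<rbrakk>
                     \<Longrightarrow> cmp K h (cmp K g f) = cmp K (cmp K h g) f"
    and idm_hom: "idm K A \<in> hom K A A"
    and idm_left: "f \<in> hom K A B \<Longrightarrow> cmp K (idm K B) f = f"
    and idm_right: "f \<in> hom K A B \<Longrightarrow> cmp K f (idm K A) = f"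
    and zero_hom: "zero K A B \<in> hom K A B"
    and add_hom: "\<lbrakk>f \<in> hom K A B; g \<in> hom K A B\<rbrakk> \<Longrightarrow> add K f g \<in> hom K A B"
    and neg_hom: "f \<in> hom K A B \<Longrightarrow> neg K f \<in> hom K A B"
    and add_assoc: "\<lbrakk>f \<in> hom K A B; g \<in> hom K A B; h \<in> hom K A B\<rbrakk>
                     \<Longrightarrow> add K (add K f g) h = add K f (add K g h)"
    and add_comm: "\<lbrakk>f \<in> hom K A B; g \<in> hom K A B\<rbrakk> \<Longrightarrow> add K f g = add K g f"
    and add_zero: "f \<in> hom K A B \<Longrightarrow> add K f (zero K A B) = f"
    and add_neg: "f \<in> hom K A B \<Longrightarrow> add K f (neg K f) = zero K A B"
    and cmp_add_left: "\<lbrakk>f \<in> hom K A B; g \<in> hom K B C; h \<in> hom K B C\<rbrakk>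
                     \<Longrightarrow> cmp K (add K g h) f = add K (cmp K g f) (cmp K h f)"
    and cmp_add_right: "\<lbrakk>f \<in> hom K A B; g \<in> hom K A B; h \<in> hom K B C\<rbrakk>
                     \<Longrightarrow> cmp K h (add K f g) = add K (cmp K h f) (cmp K h g)"
    and dag_hom: "f \<in> hom K A B \<Longrightarrow> dag K f \<in> hom K B A"
    and dag_dag: "f \<in> hom K A B \<Longrightarrow> dag K (dag K f) = f"
    and dag_cmp: "\<lbrakk>f \<in> hom K A B; g \<in> hom K B C\<rbrakk> \<Longrightarrow> dag K (cmp K g f) = cmp K (dag K f) (dag K g)"
    and dag_idm: "dag K (idm K A) = idm K A"
    and dag_add: "\<lbrakk>f \<in> hom K A B; g \<in> hom K A B\<rbrakk> \<Longrightarrow> dag K (add K f g) = add K (dag K f) (dag K g)"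
    and p1_hom: "p1 K A B \<in> hom K (bip K A B) A"
    and p2_hom: "p2 K A B \<in> hom K (bip K A B) B"
    and i1_hom: "i1 K A B \<in> hom K A (bip K A B)"
    and i2_hom: "i2 K A B \<in> hom K B (bip K A B)"
    and p1_i1: "cmp K (p1 K A B) (i1 K A B) = idm K A"
    and p2_i2: "cmp K (p2 K A B) (i2 K A B) = idm K B"
    and p1_i2: "cmp K (p1 K A B) (i2 K A B) = zero K B A"
    and p2_i1: "cmp K (p2 K A B) (i1 K A B) = zero K A B"
    and bip_sum: "add K (cmp K (i1 K A B) (p1 K A B)) (cmp K (i2 K A B) (p2 K A B)) = idm K (bip K A B)"
    and dag_p1: "dag K (p1 K A B) = i1 K A B"
    and dag_p2: "dag K (p2 K A B) = i2 K A B"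
    and zobj_initial: "hom K (zobj K) A = {zero K (zobj K) A}"
    and zobj_terminal: "hom K A (zobj K) = {zero K A (zobj K)}"

definition sub :: "('o, 'm) dacat \<Rightarrow> 'm \<Rightarrow> 'm \<Rightarrow> 'm" where
  "sub K f g = add K f (neg K g)"

definition dpos :: "('o, 'm) dacat \<Rightarrow> 'o \<Rightarrow> 'm \<Rightarrow> bool" where
  "dpos K B p \<longleftrightarrow> (\<exists>D. \<exists>\<phi> \<in> hom K B D. p = cmp K (dag K \<phi>) \<phi>)"

definition col :: "('o, 'm) dacat \<Rightarrow> 'o \<Rightarrow> 'o \<Rightarrow> 'm \<Rightarrow> 'm \<Rightarrow> 'm" where
  "col K B C f g = add K (cmp K (i1 K B C) f) (cmp K (i2 K B C) g)"

definition row :: "('o, 'm) dacat \<Rightarrow> 'o \<Rightarrow> 'o \<Rightarrow> 'm \<Rightarrow> 'm \<Rightarrow> 'm" where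
  "row K A B f g = add K (cmp K f (p1 K A B)) (cmp K g (p2 K A B))"

text \<open>2x2 matrix [a b; c d] : A (+) B \<rightarrow> C (+) D\<close>
definition mat2 :: "('o, 'm) dacat \<Rightarrow> 'o \<Rightarrow> 'o \<Rightarrow> 'o \<Rightarrow> 'o \<Rightarrow> 'm \<Rightarrow> 'm \<Rightarrow> 'm \<Rightarrow> 'm \<Rightarrow> 'm" where
  "mat2 K A B C D a b c d = col K C D (row K A B a b) (row K A B c d)"

definition dsum :: "('o, 'm) dacat \<Rightarrow> 'o \<Rightarrow> 'o \<Rightarrow> 'o \<Rightarrow> 'o \<Rightarrow> 'm \<Rightarrow> 'm \<Rightarrow> 'm" where
  "dsum K A B C D f g = mat2 K A C B D f (zero K C B) (zero K A D) g"

definition assoc_iso :: "('o, 'm) dacat \<Rightarrow> 'o \<Rightarrow> 'o \<Rightarrow> 'o \<Rightarrow> 'm" where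
  "assoc_iso K A B C =
     col K A (bip K B C) (cmp K (p1 K A B) (p1 K (bip K A B) C))
       (col K B C (cmp K (p2 K A B) (p1 K (bip K A B) C)) (p2 K (bip K A B) C))"

type_synonym 'a gmap = "'a \<times> 'a \<times> 'a"

definition gauss_hom :: "('o, 'm) dacat \<Rightarrow> 'o \<Rightarrow> 'o \<Rightarrow> 'o \<Rightarrow> 'm gmap set" where
  "gauss_hom K X A B = {(f, p, x). f \<in> hom K A B \<and> p \<in> hom K B B \<and> dpos K B p \<and> x \<in> hom K X B}"

definition gcomp :: "('o, 'm) dacat \<Rightarrow> 'm gmap \<Rightarrow> 'm gmap \<Rightarrow> 'm gmap" where
  "gcomp K G F = (case G of (g, q, y) \<Rightarrow> case F of (f, p, x) \<Rightarrow>
       (cmp K g f, add K q (cmp K (cmp K g p) (dag K g)), add K y (cmp K g x)))"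

definition gId :: "('o, 'm) dacat \<Rightarrow> 'o \<Rightarrow> 'o \<Rightarrow> 'm gmap" where
  "gId K X A = (idm K A, zero K A A, zero K X A)"

definition gtensor :: "('o, 'm) dacat \<Rightarrow> 'o \<Rightarrow> 'o \<Rightarrow> 'o \<Rightarrow> 'o \<Rightarrow> 'm gmap \<Rightarrow> 'm gmap \<Rightarrow> 'm gmap" where
  "gtensor K A B C D F G = (case F of (f, p, x) \<Rightarrow> case G of (g, q, y) \<Rightarrow>
       (dsum K A B C D f g, dsum K B B D D p q, col K B D x y))"

definition gcopy :: "('o, 'm) dacat \<Rightarrow> 'o \<Rightarrow> 'o \<Rightarrow> 'm gmap" where
  "gcopy K X A = (col K A A (idm K A) (idm K A), zero K (bip K A A) (bip K A A), zero K X (bip K A A))"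

definition gdel :: "('o, 'm) dacat \<Rightarrow> 'o \<Rightarrow> 'o \<Rightarrow> 'm gmap" where
  "gdel K X A = (zero K A (zobj K), zero K (zobj K) (zobj K), zero K X (zobj K))"

definition gassoc :: "('o, 'm) dacat \<Rightarrow> 'o \<Rightarrow> 'o \<Rightarrow> 'o \<Rightarrow> 'o \<Rightarrow> 'm gmap" where
  "gassoc K X A B C = (assoc_iso K A B C, zero K (bip K A (bip K B C)) (bip K A (bip K B C)),
                     zero K X (bip K A (bip K B C)))"

definition glunit :: "('o, 'm) dacat \<Rightarrow> 'o \<Rightarrow> 'o \<Rightarrow> 'm gmap" where
  "glunit K X A = (p2 K (zobj K) A, zero K A A, zero K X A)"

text \<open>G : B (x) A \<rightarrow> C is a conditional of F : A \<rightarrow> B (x) C: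
  (Id_B (x) G) o (copy_B (x) Id_A) o (Id_B (x) del_C (x) Id_A) o (F (x) Id_A) o copy_A = F,
  with associators and the left unitor 0 (x) A \<cong> A inserted explicitly.\<close>
definition is_conditional :: "('o, 'm) dacat \<Rightarrow> 'o \<Rightarrow> 'o \<Rightarrow> 'o \<Rightarrow> 'o \<Rightarrow> 'm gmap \<Rightarrow> 'm gmap \<Rightarrow> bool" where
  "is_conditional K X A B C G F \<longleftrightarrow>
     gcomp K (gtensor K B B (bip K B A) C (gId K X B) G)
      (gcomp K (gassoc K X B B A)
       (gcomp K (gtensor K B (bip K B B) A A (gcopy K X B) (gId K X A))
        (gcomp K (gtensor K B B (bip K (zobj K) A) A (gId K X B) (glunit K X A))
         (gcomp K (gtensor K B B (bip K C A) (bip K (zobj K) A) (gId K X B)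
                   (gtensor K C (zobj K) A A (gdel K X C) (gId K X A)))
          (gcomp K (gassoc K X B C A)
           (gcomp K (gtensor K A (bip K B C) A A F (gId K X A))
             (gcopy K X A)))))))
     = F"


end

theory Submission
  imports Defs
begin

context dagger_additive begin

lemma col_hom[intro]: "a \<in> hom K Z B \<Longrightarrow> b \<in> hom K Z C \<Longrightarrow> col K B C a b \<in> hom K Z (bip K B C)"
  unfolding col_def by (meson add_hom cmp_hom i1_hom i2_hom)
lemma row_hom[intro]: "a \<in> hom K A Z \<Longrightarrow> b \<in> hom K B Z \<Longrightarrow> row K A B a b \<in> hom K (bip K A B) Z"
  unfolding row_def by (meson add_hom cmp_hom p1_hom p2_hom)
lemma mat2_hom[intro]: "a \<in> hom K A C \<Longrightarrow> b \<in> hom K B C \<Longrightarrow> c \<in> hom K A D \<Longrightarrow> d \<in> hom K B D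
  \<Longrightarrow> mat2 K A B C D a b c d \<in> hom K (bip K A B) (bip K C D)"
  unfolding mat2_def by blast
lemma dsum_hom[intro]: "f \<in> hom K A B \<Longrightarrow> g \<in> hom K C D \<Longrightarrow> dsum K A B C D f g \<in> hom K (bip K A C) (bip K B D)"
  unfolding dsum_def by (blast intro: zero_hom)
lemma assoc_hom[intro]: "assoc_iso K A B C \<in> hom K (bip K (bip K A B) C) (bip K A (bip K B C))"
  unfolding assoc_iso_def by (blast intro: cmp_hom p1_hom p2_hom)

lemmas homs = cmp_hom idm_hom zero_hom add_hom neg_hom dag_hom p1_hom p2_hom i1_hom i2_hom
  col_hom row_hom mat2_hom dsum_hom assoc_hom

lemma zero_add: "f \<in> hom K A B \<Longrightarrow> add K (zero K A B) f = f"
  by (metis add_comm add_zero zero_hom)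

lemma add_solve: assumes "x \<in> hom K A B" "y \<in> hom K A B" "add K x y = z" shows "y = add K z (neg K x)"
proof -
  have "add K z (neg K x) = add K (add K y x) (neg K x)" using assms add_comm by metis
  also have "\<dots> = add K y (add K x (neg K x))" using assms by (simp add: add_assoc neg_hom)
  also have "\<dots> = y" using assms by (simp add: add_neg add_zero)
  finally show ?thesis by simp
qed

lemma self_add_zero: assumes "h \<in> hom K A B" "add K h h = h" shows "h = zero K A B"
  using add_solve[OF assms(1,1,2)] add_neg[OF assms(1)] by simp

lemma cmp_zero_left: assumes "f \<in> hom K A B" shows "cmp K (zero K B C) f = zero K A C"
proof -
  have h: "cmp K (zero K B C) f \<in> hom K A C" using assms by (blast intro: homs)
  have "cmp K (zero K B C) f = cmp K (add K (zero K B C) (zero K B C)) f" by (simp add: add_zero zero_hom)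
  also have "\<dots> = add K (cmp K (zero K B C) f) (cmp K (zero K B C) f)" using assms cmp_add_left zero_hom by blast
  finally show ?thesis using self_add_zero[OF h] by simp
qed

lemma cmp_zero_right: assumes "g \<in> hom K B C" shows "cmp K g (zero K A B) = zero K A C"
proof -
  have h: "cmp K g (zero K A B) \<in> hom K A C" using assms by (blast intro: homs)
  have "cmp K g (zero K A B) = cmp K g (add K (zero K A B) (zero K A B))" by (simp add: add_zero zero_hom)
  also have "\<dots> = add K (cmp K g (zero K A B)) (cmp K g (zero K A B))" using assms cmp_add_right zero_hom by blast
  finally show ?thesis using self_add_zero[OF h] by simp
qed

lemma dag_i1: "dag K (i1 K A B) = p1 K A B" by (metis dag_dag dag_p1 p1_hom)
lemma dag_i2: "dag K (i2 K A B) = p2 K A B" by (metis dag_dag dag_p2 p2_hom)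

lemma p1_col: assumes "a \<in> hom K Z B" "b \<in> hom K Z C" shows "cmp K (p1 K B C) (col K B C a b) = a"
proof -
  have "cmp K (p1 K B C) (col K B C a b) = add K (cmp K (cmp K (p1 K B C) (i1 K B C)) a) (cmp K (cmp K (p1 K B C) (i2 K B C)) b)"
    unfolding col_def using cmp_add_right[OF cmp_hom[OF assms(1) i1_hom] cmp_hom[OF assms(2) i2_hom] p1_hom]
      cmp_assoc[OF assms(1) i1_hom p1_hom] cmp_assoc[OF assms(2) i2_hom p1_hom] by simp
  also have "\<dots> = a" using assms by (simp add: p1_i1 p1_i2 idm_left cmp_zero_left add_zero)
  finally show ?thesis .
qed

lemma p2_col: assumes "a \<in> hom K Z B" "b \<in> hom K Z C" shows "cmp K (p2 K B C) (col K B C a b) = b"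
proof -
  have "cmp K (p2 K B C) (col K B C a b) = add K (cmp K (cmp K (p2 K B C) (i1 K B C)) a) (cmp K (cmp K (p2 K B C) (i2 K B C)) b)"
    unfolding col_def using cmp_add_right[OF cmp_hom[OF assms(1) i1_hom] cmp_hom[OF assms(2) i2_hom] p2_hom]
      cmp_assoc[OF assms(1) i1_hom p2_hom] cmp_assoc[OF assms(2) i2_hom p2_hom] by simp
  also have "\<dots> = b" using assms by (simp add: p2_i1 p2_i2 idm_left cmp_zero_left zero_add)
  finally show ?thesis .
qed

lemma col_eq: assumes "a \<in> hom K Z B" "b \<in> hom K Z C" "c \<in> hom K Z B" "d \<in> hom K Z C"
  "col K B C a b = col K B C c d" shows "a = c" "b = d"
  using p1_col[OF assms(1,2)] p1_col[OF assms(3,4)] p2_col[OF assms(1,2)] p2_col[OF assms(3,4)] assms(5) by metis+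

lemma col_eta: assumes "h \<in> hom K Z (bip K B C)" shows "h = col K B C (cmp K (p1 K B C) h) (cmp K (p2 K B C) h)"
proof -
  have "h = cmp K (idm K (bip K B C)) h" using assms idm_left by simp
  also have "\<dots> = col K B C (cmp K (p1 K B C) h) (cmp K (p2 K B C) h)"
    unfolding bip_sum[symmetric] col_def
    using cmp_add_left[OF assms cmp_hom[OF p1_hom i1_hom] cmp_hom[OF p2_hom i2_hom]]
      cmp_assoc[OF assms p1_hom i1_hom] cmp_assoc[OF assms p2_hom i2_hom] by simp
  finally show ?thesis .
qed

lemma row_i1: assumes "a \<in> hom K A Z" "b \<in> hom K B Z" shows "cmp K (row K A B a b) (i1 K A B) = a"
proof -
  have "cmp K (row K A B a b) (i1 K A B) = add K (cmp K a (cmp K (p1 K A B) (i1 K A B))) (cmp K b (cmp K (p2 K A B) (i1 K A B)))"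
    unfolding row_def using cmp_add_left[OF i1_hom cmp_hom[OF p1_hom assms(1)] cmp_hom[OF p2_hom assms(2)]]
      cmp_assoc[OF i1_hom p1_hom assms(1)] cmp_assoc[OF i1_hom p2_hom assms(2)] by simp
  also have "\<dots> = a" using assms by (simp add: p1_i1 p2_i1 idm_right cmp_zero_right add_zero)
  finally show ?thesis .
qed

lemma row_i2: assumes "a \<in> hom K A Z" "b \<in> hom K B Z" shows "cmp K (row K A B a b) (i2 K A B) = b"
proof -
  have "cmp K (row K A B a b) (i2 K A B) = add K (cmp K a (cmp K (p1 K A B) (i2 K A B))) (cmp K b (cmp K (p2 K A B) (i2 K A B)))"
    unfolding row_def using cmp_add_left[OF i2_hom cmp_hom[OF p1_hom assms(1)] cmp_hom[OF p2_hom assms(2)]]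
      cmp_assoc[OF i2_hom p1_hom assms(1)] cmp_assoc[OF i2_hom p2_hom assms(2)] by simp
  also have "\<dots> = b" using assms by (simp add: p1_i2 p2_i2 idm_right cmp_zero_right zero_add)
  finally show ?thesis .
qed

lemma row_eq: assumes "a \<in> hom K A Z" "b \<in> hom K B Z" "c \<in> hom K A Z" "d \<in> hom K B Z"
  "row K A B a b = row K A B c d" shows "a = c" "b = d"
  using row_i1[OF assms(1,2)] row_i1[OF assms(3,4)] row_i2[OF assms(1,2)] row_i2[OF assms(3,4)] assms(5) by metis+

lemma row_eta: assumes "h \<in> hom K (bip K A B) Z" shows "h = row K A B (cmp K h (i1 K A B)) (cmp K h (i2 K A B))"
proof -
  have "h = cmp K h (idm K (bip K A B))" using assms idm_right by simp
  also have "\<dots> = row K A B (cmp K h (i1 K A B)) (cmp K h (i2 K A B))"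
    unfolding bip_sum[symmetric] row_def
    using cmp_add_right[OF cmp_hom[OF p1_hom i1_hom] cmp_hom[OF p2_hom i2_hom] assms]
      cmp_assoc[OF p1_hom i1_hom assms] cmp_assoc[OF p2_hom i2_hom assms] by simp
  finally show ?thesis .
qed


lemma row_zero: "row K A B (zero K A Z) (zero K B Z) = zero K (bip K A B) Z"
  unfolding row_def using cmp_zero_left[OF p1_hom] cmp_zero_left[OF p2_hom] add_zero[OF zero_hom] by simp
lemma col_zero: "col K B C (zero K Z B) (zero K Z C) = zero K Z (bip K B C)"
  unfolding col_def using cmp_zero_right[OF i1_hom] cmp_zero_right[OF i2_hom] add_zero[OF zero_hom] by simp
lemma dsum_zero: "dsum K A B C D (zero K A B) (zero K C D) = zero K (bip K A C) (bip K B D)"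
  unfolding dsum_def mat2_def by (simp add: row_zero col_zero)

lemma col_cmp: assumes "a \<in> hom K Z B" "b \<in> hom K Z C" "h \<in> hom K W Z"
  shows "cmp K (col K B C a b) h = col K B C (cmp K a h) (cmp K b h)"
proof -
  have c: "col K B C a b \<in> hom K Z (bip K B C)" using assms by blast
  show ?thesis
    apply (subst col_eta[OF cmp_hom[OF assms(3) c]])
    using cmp_assoc[OF assms(3) c p1_hom] cmp_assoc[OF assms(3) c p2_hom] p1_col[OF assms(1,2)] p2_col[OF assms(1,2)]
    by simp
qed

lemma cmp_row: assumes "a \<in> hom K A Z" "b \<in> hom K B Z" "h \<in> hom K Z W"
  shows "cmp K h (row K A B a b) = row K A B (cmp K h a) (cmp K h b)"
proof -
  have c: "row K A B a b \<in> hom K (bip K A B) Z" using assms by blast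
  show ?thesis
    apply (subst row_eta[OF cmp_hom[OF c assms(3)]])
    using cmp_assoc[OF i1_hom c assms(3)] cmp_assoc[OF i2_hom c assms(3)] row_i1[OF assms(1,2)] row_i2[OF assms(1,2)]
    by simp
qed

lemma row_col: assumes "a \<in> hom K A Z" "b \<in> hom K B Z" "c \<in> hom K W A" "d \<in> hom K W B"
  shows "cmp K (row K A B a b) (col K A B c d) = add K (cmp K a c) (cmp K b d)"
proof -
  have cl: "col K A B c d \<in> hom K W (bip K A B)" using assms by blast
  show ?thesis unfolding row_def
    using cmp_add_left[OF cl cmp_hom[OF p1_hom assms(1)] cmp_hom[OF p2_hom assms(2)]]
      cmp_assoc[OF cl p1_hom assms(1), symmetric] cmp_assoc[OF cl p2_hom assms(2), symmetric]
      p1_col[OF assms(3,4)] p2_col[OF assms(3,4)]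
    by simp
qed

lemma dag_col: assumes "a \<in> hom K Z B" "b \<in> hom K Z C"
  shows "dag K (col K B C a b) = row K B C (dag K a) (dag K b)"
  unfolding col_def row_def
  using dag_add[OF cmp_hom[OF assms(1) i1_hom] cmp_hom[OF assms(2) i2_hom]]
    dag_cmp[OF assms(1) i1_hom] dag_cmp[OF assms(2) i2_hom] dag_i1 dag_i2 by simp

lemma col_add: assumes "a \<in> hom K Z B" "b \<in> hom K Z C" "c \<in> hom K Z B" "d \<in> hom K Z C"
  shows "add K (col K B C a b) (col K B C c d) = col K B C (add K a c) (add K b d)"
proof -
  have c1: "col K B C a b \<in> hom K Z (bip K B C)" and c2: "col K B C c d \<in> hom K Z (bip K B C)" using assms by blast+
  show ?thesis
    apply (subst col_eta[OF add_hom[OF c1 c2]])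
    using cmp_add_right[OF c1 c2 p1_hom] cmp_add_right[OF c1 c2 p2_hom]
      p1_col[OF assms(1,2)] p2_col[OF assms(1,2)] p1_col[OF assms(3,4)] p2_col[OF assms(3,4)] by simp
qed

lemma row_add: assumes "a \<in> hom K A Z" "b \<in> hom K B Z" "c \<in> hom K A Z" "d \<in> hom K B Z"
  shows "add K (row K A B a b) (row K A B c d) = row K A B (add K a c) (add K b d)"
proof -
  have c1: "row K A B a b \<in> hom K (bip K A B) Z" and c2: "row K A B c d \<in> hom K (bip K A B) Z" using assms by blast+
  show ?thesis
    apply (subst row_eta[OF add_hom[OF c1 c2]])
    using cmp_add_left[OF i1_hom c1 c2] cmp_add_left[OF i2_hom c1 c2]
      row_i1[OF assms(1,2)] row_i2[OF assms(1,2)] row_i1[OF assms(3,4)] row_i2[OF assms(3,4)] by simp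
qed

lemma mat2_add: assumes "a \<in> hom K A C" "b \<in> hom K B C" "c \<in> hom K A D" "d \<in> hom K B D"
   "a' \<in> hom K A C" "b' \<in> hom K B C" "c' \<in> hom K A D" "d' \<in> hom K B D"
  shows "add K (mat2 K A B C D a b c d) (mat2 K A B C D a' b' c' d') = mat2 K A B C D (add K a a') (add K b b') (add K c c') (add K d d')"
  unfolding mat2_def
  using col_add[OF row_hom[OF assms(1,2)] row_hom[OF assms(3,4)] row_hom[OF assms(5,6)] row_hom[OF assms(7,8)]]
    row_add[OF assms(1,2,5,6)] row_add[OF assms(3,4,7,8)] by simp

lemma mat2_eq: assumes "a \<in> hom K A C" "b \<in> hom K B C" "c \<in> hom K A D" "d \<in> hom K B D"
   "a' \<in> hom K A C" "b' \<in> hom K B C" "c' \<in> hom K A D" "d' \<in> hom K B D"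
   "mat2 K A B C D a b c d = mat2 K A B C D a' b' c' d'"
  shows "a = a'" "b = b'" "c = c'" "d = d'"
proof -
  have r: "row K A B a b = row K A B a' b'" "row K A B c d = row K A B c' d'"
    using col_eq[OF row_hom[OF assms(1,2)] row_hom[OF assms(3,4)] row_hom[OF assms(5,6)] row_hom[OF assms(7,8)]]
      assms(9) unfolding mat2_def by blast+
  show "a = a'" "b = b'" using row_eq[OF assms(1,2,5,6) r(1)] by blast+
  show "c = c'" "d = d'" using row_eq[OF assms(3,4,7,8) r(2)] by blast+
qed

lemma dsum_col: assumes "f \<in> hom K A B" "g \<in> hom K C D" "a \<in> hom K Z A" "c \<in> hom K Z C"
  shows "cmp K (dsum K A B C D f g) (col K A C a c) = col K B D (cmp K f a) (cmp K g c)"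
  unfolding dsum_def mat2_def
  using col_cmp[OF row_hom[OF assms(1) zero_hom] row_hom[OF zero_hom assms(2)] col_hom[OF assms(3,4)]]
    row_col[OF assms(1) zero_hom assms(3,4)] row_col[OF zero_hom assms(2) assms(3,4)]
    cmp_zero_left[OF assms(3)] cmp_zero_left[OF assms(4)] add_zero[OF cmp_hom[OF assms(3,1)]]
    zero_add[OF cmp_hom[OF assms(4,2)]]
  by simp

lemma assoc_col: assumes "a \<in> hom K Z A" "b \<in> hom K Z B" "c \<in> hom K Z C"
  shows "cmp K (assoc_iso K A B C) (col K (bip K A B) C (col K A B a b) c) = col K A (bip K B C) a (col K B C b c)"
proof -
  have ab: "col K A B a b \<in> hom K Z (bip K A B)" using assms by blast
  have x: "col K (bip K A B) C (col K A B a b) c \<in> hom K Z (bip K (bip K A B) C)" using ab assms by blast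
  have q1: "cmp K (p1 K (bip K A B) C) (col K (bip K A B) C (col K A B a b) c) = col K A B a b"
    using p1_col[OF ab assms(3)] .
  have q2: "cmp K (p2 K (bip K A B) C) (col K (bip K A B) C (col K A B a b) c) = c"
    using p2_col[OF ab assms(3)] .
  have h1: "cmp K (cmp K (p1 K A B) (p1 K (bip K A B) C)) (col K (bip K A B) C (col K A B a b) c) = a"
    using cmp_assoc[OF x p1_hom p1_hom, symmetric] q1 p1_col[OF assms(1,2)] by simp
  have h2: "cmp K (cmp K (p2 K A B) (p1 K (bip K A B) C)) (col K (bip K A B) C (col K A B a b) c) = b"
    using cmp_assoc[OF x p1_hom p2_hom, symmetric] q1 p2_col[OF assms(1,2)] by simp
  show ?thesis unfolding assoc_iso_def
    using col_cmp[OF cmp_hom[OF p1_hom p1_hom] col_hom[OF cmp_hom[OF p1_hom p2_hom] p2_hom] x]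
      col_cmp[OF cmp_hom[OF p1_hom p2_hom] p2_hom x] h1 h2 q2 by simp
qed


lemma chain:
  assumes m: "m \<in> hom K B C" and k: "k \<in> hom K A C"
    and a: "a \<in> hom K Z B" and b: "b \<in> hom K Z C" and c: "c \<in> hom K Z A"
  shows "cmp K (dsum K B B (bip K B A) C (idm K B) (row K B A m k))
         (cmp K (assoc_iso K B B A)
          (cmp K (dsum K B (bip K B B) A A (col K B B (idm K B) (idm K B)) (idm K A))
           (cmp K (dsum K B B (bip K (zobj K) A) A (idm K B) (p2 K (zobj K) A))
            (cmp K (dsum K B B (bip K C A) (bip K (zobj K) A) (idm K B)
                     (dsum K C (zobj K) A A (zero K C (zobj K)) (idm K A)))
             (cmp K (assoc_iso K B C A) (col K (bip K B C) A (col K B C a b) c))))))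
   = col K B C a (add K (cmp K m a) (cmp K k c))"
proof -
  have z0: "zero K Z (zobj K) \<in> hom K Z (zobj K)" by (rule zero_hom)
  have s3: "cmp K (assoc_iso K B C A) (col K (bip K B C) A (col K B C a b) c) = col K B (bip K C A) a (col K C A b c)"
    by (rule assoc_col[OF a b c])
  have s4: "cmp K (dsum K B B (bip K C A) (bip K (zobj K) A) (idm K B)
                     (dsum K C (zobj K) A A (zero K C (zobj K)) (idm K A))) (col K B (bip K C A) a (col K C A b c))
      = col K B (bip K (zobj K) A) a (col K (zobj K) A (zero K Z (zobj K)) c)"
    using dsum_col[OF idm_hom dsum_hom[OF zero_hom idm_hom] a col_hom[OF b c]]
      dsum_col[OF zero_hom idm_hom b c] idm_left[OF a] idm_left[OF c] cmp_zero_left[OF b] by simp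
  have s5: "cmp K (dsum K B B (bip K (zobj K) A) A (idm K B) (p2 K (zobj K) A)) (col K B (bip K (zobj K) A) a (col K (zobj K) A (zero K Z (zobj K)) c))
     = col K B A a c"
    using dsum_col[OF idm_hom p2_hom a col_hom[OF z0 c]] idm_left[OF a] p2_col[OF z0 c] by simp
  have s6: "cmp K (dsum K B (bip K B B) A A (col K B B (idm K B) (idm K B)) (idm K A)) (col K B A a c)
     = col K (bip K B B) A (col K B B a a) c"
    using dsum_col[OF col_hom[OF idm_hom idm_hom] idm_hom a c] col_cmp[OF idm_hom idm_hom a] idm_left[OF a] idm_left[OF c] by simp
  have s7: "cmp K (assoc_iso K B B A) (col K (bip K B B) A (col K B B a a) c) = col K B (bip K B A) a (col K B A a c)"
    by (rule assoc_col[OF a a c])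
  have s8: "cmp K (dsum K B B (bip K B A) C (idm K B) (row K B A m k)) (col K B (bip K B A) a (col K B A a c))
     = col K B C a (add K (cmp K m a) (cmp K k c))"
    using dsum_col[OF idm_hom row_hom[OF m k] a col_hom[OF a c]] idm_left[OF a] row_col[OF m k a c] by simp
  show ?thesis using s3 s4 s5 s6 s7 s8 by simp
qed

lemma gfinal: assumes "g \<in> hom K B C" "n \<in> hom K S B" "P \<in> hom K S S"
  shows "gcomp K (g, q, y) (l, cmp K (cmp K n P) (dag K n), x)
    = (cmp K g l, add K q (cmp K (cmp K (cmp K g n) P) (dag K (cmp K g n))), add K y (cmp K g x))"
proof -
  have nP: "cmp K n P \<in> hom K S B" using assms by (blast intro: homs)
  have "cmp K (cmp K g (cmp K (cmp K n P) (dag K n))) (dag K g)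
      = cmp K (cmp K (cmp K g (cmp K n P)) (dag K n)) (dag K g)"
    using cmp_assoc[OF dag_hom[OF assms(2)] nP assms(1)] by simp
  also have "\<dots> = cmp K (cmp K g (cmp K n P)) (cmp K (dag K n) (dag K g))"
    using cmp_assoc[OF dag_hom[OF assms(1)] dag_hom[OF assms(2)] cmp_hom[OF nP assms(1)]] by simp
  also have "\<dots> = cmp K (cmp K (cmp K g n) P) (dag K (cmp K g n))"
    using cmp_assoc[OF assms(3) assms(2) assms(1)] dag_cmp[OF assms(2) assms(1)] by simp
  finally show ?thesis unfolding gcomp_def by simp
qed

lemma gstruct: assumes "g \<in> hom K B C" "n \<in> hom K S B" "P \<in> hom K S S" "x \<in> hom K X B"
  shows "gcomp K (g, zero K C C, zero K X C) (l, cmp K (cmp K n P) (dag K n), x)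
    = (cmp K g l, cmp K (cmp K (cmp K g n) P) (dag K (cmp K g n)), cmp K g x)"
  unfolding gfinal[OF assms(1-3)]
  using zero_add[OF cmp_hom[OF assms(4,1)]] zero_add[OF cmp_hom[OF dag_hom[OF cmp_hom[OF assms(2,1)]] cmp_hom[OF assms(3) cmp_hom[OF assms(2,1)]]]]
  by simp

lemma NPN: assumes m: "m \<in> hom K B C" and \<alpha>: "\<alpha> \<in> hom K B B" and \<beta>: "\<beta> \<in> hom K C B"
   and \<gamma>: "\<gamma> \<in> hom K B C" and \<delta>: "\<delta> \<in> hom K C C"
  shows "cmp K (cmp K (col K B C (p1 K B C) (cmp K m (p1 K B C))) (mat2 K B C B C \<alpha> \<beta> \<gamma> \<delta>))
           (dag K (col K B C (p1 K B C) (cmp K m (p1 K B C))))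
       = mat2 K B C B C \<alpha> (cmp K \<alpha> (dag K m)) (cmp K m \<alpha>) (cmp K m (cmp K \<alpha> (dag K m)))"
proof -
  let ?R1 = "row K B C \<alpha> \<beta>" and ?R2 = "row K B C \<gamma> \<delta>"
  have R1: "?R1 \<in> hom K (bip K B C) B" and R2: "?R2 \<in> hom K (bip K B C) C" using assms by blast+
  have S: "mat2 K B C B C \<alpha> \<beta> \<gamma> \<delta> = col K B C ?R1 ?R2" unfolding mat2_def ..
  have Sh: "col K B C ?R1 ?R2 \<in> hom K (bip K B C) (bip K B C)" using R1 R2 by blast
  have mp: "cmp K m (p1 K B C) \<in> hom K (bip K B C) C" using p1_hom m by (rule cmp_hom)
  have NS: "cmp K (col K B C (p1 K B C) (cmp K m (p1 K B C))) (col K B C ?R1 ?R2) = col K B C ?R1 (cmp K m ?R1)"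
    using col_cmp[OF p1_hom mp Sh] p1_col[OF R1 R2] cmp_assoc[OF Sh p1_hom m] by simp
  have dN: "dag K (col K B C (p1 K B C) (cmp K m (p1 K B C))) = row K B C (i1 K B C) (cmp K (i1 K B C) (dag K m))"
    using dag_col[OF p1_hom mp] dag_cmp[OF p1_hom m] dag_p1 by simp
  have i1m: "cmp K (i1 K B C) (dag K m) \<in> hom K C (bip K B C)" using dag_hom[OF m] i1_hom by (rule cmp_hom)
  have dNh: "row K B C (i1 K B C) (cmp K (i1 K B C) (dag K m)) \<in> hom K (bip K B C) (bip K B C)" using i1_hom i1m by blast
  have R1N: "cmp K ?R1 (row K B C (i1 K B C) (cmp K (i1 K B C) (dag K m))) = row K B C \<alpha> (cmp K \<alpha> (dag K m))"
    using cmp_row[OF i1_hom i1m R1] row_i1[OF \<alpha> \<beta>] cmp_assoc[OF dag_hom[OF m] i1_hom R1] by simp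
  have last: "cmp K (col K B C ?R1 (cmp K m ?R1)) (row K B C (i1 K B C) (cmp K (i1 K B C) (dag K m)))
     = col K B C (row K B C \<alpha> (cmp K \<alpha> (dag K m))) (cmp K m (row K B C \<alpha> (cmp K \<alpha> (dag K m))))"
    using col_cmp[OF R1 cmp_hom[OF R1 m] dNh] R1N cmp_assoc[OF dNh R1 m] by simp
  show ?thesis unfolding S NS dN last mat2_def
    using cmp_row[OF \<alpha> cmp_hom[OF dag_hom[OF m] \<alpha>] m] by simp
qed

end

theorem mainTheorem6:
  fixes K :: "('o, 'm) dacat"
  assumes cat: "dagger_additive K"
    and f: "f \<in> hom K A B" and g: "g \<in> hom K A C"
    and \<alpha>: "\<alpha> \<in> hom K B B" and \<beta>: "\<beta> \<in> hom K C B" and \<delta>: "\<delta> \<in> hom K C C"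
    and s: "s \<in> hom K X B" and t: "t \<in> hom K X C"
    and Fpos: "dpos K (bip K B C) (mat2 K B C B C \<alpha> \<beta> (dag K \<beta>) \<delta>)"
    and m: "m \<in> hom K B C" and k: "k \<in> hom K A C"
    and \<eta>: "\<eta> \<in> hom K C C" and \<eta>pos: "dpos K C \<eta>" and u: "u \<in> hom K X C"
    and cond: "is_conditional K X A B C (row K B A m k, \<eta>, u)
                 (col K B C f g, mat2 K B C B C \<alpha> \<beta> (dag K \<beta>) \<delta>, col K B C s t)"
  shows "k = sub K g (cmp K m f) \<and> cmp K m \<alpha> = dag K \<beta>
         \<and> \<eta> = sub K \<delta> (cmp K m \<beta>) \<and> u = sub K t (cmp K m s)"
proof -
  interpret D: dagger_additive K by (rule cat)
  define S where "S = mat2 K B C B C \<alpha> \<beta> (dag K \<beta>) \<delta>"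
  define L2 where "L2 = dsum K A (bip K B C) A A (col K B C f g) (idm K A)"
  define L3 where "L3 = assoc_iso K B C A"
  define L4 where "L4 = dsum K B B (bip K C A) (bip K (zobj K) A) (idm K B)
                     (dsum K C (zobj K) A A (zero K C (zobj K)) (idm K A))"
  define L5 where "L5 = dsum K B B (bip K (zobj K) A) A (idm K B) (p2 K (zobj K) A)"
  define L6 where "L6 = dsum K B (bip K B B) A A (col K B B (idm K B) (idm K B)) (idm K A)"
  define L7 where "L7 = assoc_iso K B B A"
  define L8 where "L8 = dsum K B B (bip K B A) C (idm K B) (row K B A m k)"
  define cA where "cA = col K A A (idm K A) (idm K A)"
  define N2 where "N2 = col K (bip K B C) A (col K B C (p1 K B C) (p2 K B C)) (zero K (bip K B C) A)"
  define l2 where "l2 = col K (bip K B C) A (col K B C f g) (idm K A)"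
  define x2 where "x2 = col K (bip K B C) A (col K B C s t) (zero K X A)"
  have gb: "dag K \<beta> \<in> hom K B C" using \<beta> by (rule D.dag_hom)
  have Sh: "S \<in> hom K (bip K B C) (bip K B C)" unfolding S_def using \<alpha> \<beta> gb \<delta> by (rule D.mat2_hom)
  have fg: "col K B C f g \<in> hom K A (bip K B C)" using f g by (rule D.col_hom)
  have st: "col K B C s t \<in> hom K X (bip K B C)" using s t by (rule D.col_hom)
  have L2h: "L2 \<in> hom K (bip K A A) (bip K (bip K B C) A)" unfolding L2_def using fg D.idm_hom by (rule D.dsum_hom)
  have L3h: "L3 \<in> hom K (bip K (bip K B C) A) (bip K B (bip K C A))" unfolding L3_def by (rule D.assoc_hom)
  have L4h: "L4 \<in> hom K (bip K B (bip K C A)) (bip K B (bip K (zobj K) A))" unfolding L4_def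
    by (intro D.dsum_hom D.idm_hom D.zero_hom)
  have L5h: "L5 \<in> hom K (bip K B (bip K (zobj K) A)) (bip K B A)" unfolding L5_def
    by (intro D.dsum_hom D.idm_hom D.p2_hom)
  have L6h: "L6 \<in> hom K (bip K B A) (bip K (bip K B B) A)" unfolding L6_def
    by (intro D.dsum_hom D.idm_hom D.col_hom)
  have L7h: "L7 \<in> hom K (bip K (bip K B B) A) (bip K B (bip K B A))" unfolding L7_def by (rule D.assoc_hom)
  have L8h: "L8 \<in> hom K (bip K B (bip K B A)) (bip K B C)" unfolding L8_def
    using m k by (intro D.dsum_hom D.idm_hom D.row_hom)
  have cAh: "cA \<in> hom K A (bip K A A)" unfolding cA_def by (intro D.col_hom D.idm_hom)
  have N2h: "N2 \<in> hom K (bip K B C) (bip K (bip K B C) A)" unfolding N2_def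
    by (intro D.col_hom D.p1_hom D.p2_hom D.zero_hom)
  have x2h: "x2 \<in> hom K X (bip K (bip K B C) A)" unfolding x2_def using st D.zero_hom by (rule D.col_hom)

  have T2: "gtensor K A (bip K B C) A A (col K B C f g, S, col K B C s t) (gId K X A)
     = (L2, dsum K (bip K B C) (bip K B C) A A S (zero K A A), x2)"
    unfolding gtensor_def gId_def L2_def x2_def by simp
  have T4: "gtensor K B B (bip K C A) (bip K (zobj K) A) (gId K X B) (gtensor K C (zobj K) A A (gdel K X C) (gId K X A))
     = (L4, zero K (bip K B (bip K (zobj K) A)) (bip K B (bip K (zobj K) A)), zero K X (bip K B (bip K (zobj K) A)))"
    unfolding gtensor_def gId_def gdel_def L4_def by (simp add: D.dsum_zero D.col_zero)
  have T5: "gtensor K B B (bip K (zobj K) A) A (gId K X B) (glunit K X A)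
     = (L5, zero K (bip K B A) (bip K B A), zero K X (bip K B A))"
    unfolding gtensor_def gId_def glunit_def L5_def by (simp add: D.dsum_zero D.col_zero)
  have T6: "gtensor K B (bip K B B) A A (gcopy K X B) (gId K X A)
     = (L6, zero K (bip K (bip K B B) A) (bip K (bip K B B) A), zero K X (bip K (bip K B B) A))"
    unfolding gtensor_def gId_def gcopy_def L6_def by (simp add: D.dsum_zero D.col_zero)
  have T8: "gtensor K B B (bip K B A) C (gId K X B) (row K B A m k, \<eta>, u)
     = (L8, dsum K B B C C (zero K B B) \<eta>, col K B C (zero K X B) u)"
    unfolding gtensor_def gId_def L8_def by simp
  have T3: "gassoc K X B C A = (L3, zero K (bip K B (bip K C A)) (bip K B (bip K C A)), zero K X (bip K B (bip K C A)))"
    unfolding gassoc_def L3_def ..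
  have T7: "gassoc K X B B A = (L7, zero K (bip K B (bip K B A)) (bip K B (bip K B A)), zero K X (bip K B (bip K B A)))"
    unfolding gassoc_def L7_def ..
  have TC: "gcopy K X A = (cA, zero K (bip K A A) (bip K A A), zero K X (bip K A A))"
    unfolding gcopy_def cA_def ..

  have i1S: "dsum K (bip K B C) (bip K B C) A A S (zero K A A) = cmp K (cmp K N2 S) (dag K N2)"
  proof -
    have e1: "col K B C (p1 K B C) (p2 K B C) = idm K (bip K B C)" unfolding col_def by (rule D.bip_sum)
    have e2: "N2 = i1 K (bip K B C) A" unfolding N2_def e1 unfolding col_def
      using D.idm_right[OF D.i1_hom] D.cmp_zero_right[OF D.i2_hom] D.add_zero[OF D.i1_hom] by simp
    have Sp: "cmp K S (p1 K (bip K B C) A) \<in> hom K (bip K (bip K B C) A) (bip K B C)" using D.p1_hom Sh by (rule D.cmp_hom)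
    have "dsum K (bip K B C) (bip K B C) A A S (zero K A A) = cmp K (i1 K (bip K B C) A) (cmp K S (p1 K (bip K B C) A))"
      unfolding dsum_def mat2_def D.row_zero
      using D.cmp_zero_left[OF D.p2_hom] D.add_zero[OF Sp] D.col_zero unfolding row_def col_def
      using D.cmp_zero_right[OF D.i2_hom] D.add_zero[OF D.cmp_hom[OF Sp D.i1_hom]] by simp
    also have "\<dots> = cmp K (cmp K N2 S) (dag K N2)"
      unfolding e2 D.dag_i1 using D.cmp_assoc[OF D.p1_hom Sh D.i1_hom] by simp
    finally show ?thesis .
  qed
  have W2: "gcomp K (L2, dsum K (bip K B C) (bip K B C) A A S (zero K A A), x2)
               (cA, zero K (bip K A A) (bip K A A), zero K X (bip K A A))
     = (l2, cmp K (cmp K N2 S) (dag K N2), x2)"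
  proof -
    have a: "cmp K L2 cA = l2" unfolding L2_def cA_def l2_def
      using D.dsum_col[OF fg D.idm_hom D.idm_hom D.idm_hom] D.idm_right[OF fg] D.idm_left[OF D.idm_hom] by simp
    have b: "cmp K (cmp K L2 (zero K (bip K A A) (bip K A A))) (dag K L2) = zero K (bip K (bip K B C) A) (bip K (bip K B C) A)"
      using D.cmp_zero_right[OF L2h] D.cmp_zero_left[OF D.dag_hom[OF L2h]] by simp
    have c: "cmp K L2 (zero K X (bip K A A)) = zero K X (bip K (bip K B C) A)" using D.cmp_zero_right[OF L2h] .
    have dh: "dsum K (bip K B C) (bip K B C) A A S (zero K A A) \<in> hom K (bip K (bip K B C) A) (bip K (bip K B C) A)"
      using Sh D.zero_hom by (rule D.dsum_hom)
    show ?thesis unfolding gcomp_def using a b c D.add_zero[OF dh] D.add_zero[OF x2h] i1S by simp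
  qed
  have n3: "cmp K L3 N2 \<in> hom K (bip K B C) (bip K B (bip K C A))" using N2h L3h by (rule D.cmp_hom)
  have n4: "cmp K L4 (cmp K L3 N2) \<in> hom K (bip K B C) (bip K B (bip K (zobj K) A))" using n3 L4h by (rule D.cmp_hom)
  have n5: "cmp K L5 (cmp K L4 (cmp K L3 N2)) \<in> hom K (bip K B C) (bip K B A)" using n4 L5h by (rule D.cmp_hom)
  have n6: "cmp K L6 (cmp K L5 (cmp K L4 (cmp K L3 N2))) \<in> hom K (bip K B C) (bip K (bip K B B) A)" using n5 L6h by (rule D.cmp_hom)
  have n7: "cmp K L7 (cmp K L6 (cmp K L5 (cmp K L4 (cmp K L3 N2)))) \<in> hom K (bip K B C) (bip K B (bip K B A))" using n6 L7h by (rule D.cmp_hom)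
  have y3: "cmp K L3 x2 \<in> hom K X (bip K B (bip K C A))" using x2h L3h by (rule D.cmp_hom)
  have y4: "cmp K L4 (cmp K L3 x2) \<in> hom K X (bip K B (bip K (zobj K) A))" using y3 L4h by (rule D.cmp_hom)
  have y5: "cmp K L5 (cmp K L4 (cmp K L3 x2)) \<in> hom K X (bip K B A)" using y4 L5h by (rule D.cmp_hom)
  have y6: "cmp K L6 (cmp K L5 (cmp K L4 (cmp K L3 x2))) \<in> hom K X (bip K (bip K B B) A)" using y5 L6h by (rule D.cmp_hom)

  note cd = cond[unfolded is_conditional_def S_def[symmetric], unfolded T2 TC W2 T3 T4 T5 T6 T7 T8,
     unfolded D.gstruct[OF L3h N2h Sh x2h] D.gstruct[OF L4h n3 Sh y3] D.gstruct[OF L5h n4 Sh y4]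
      D.gstruct[OF L6h n5 Sh y5] D.gstruct[OF L7h n6 Sh y6] D.gfinal[OF L8h n7 Sh]]
  have p12: "col K B C (p1 K B C) (p2 K B C) \<in> hom K (bip K B C) (bip K B C)" by (intro D.col_hom D.p1_hom D.p2_hom)
  have C1: "cmp K L8 (cmp K L7 (cmp K L6 (cmp K L5 (cmp K L4 (cmp K L3 l2))))) = col K B C f (add K (cmp K m f) k)"
    unfolding L3_def L4_def L5_def L6_def L7_def L8_def l2_def
    using D.chain[OF m k f g D.idm_hom] D.idm_right[OF k] by simp
  have mp: "cmp K m (p1 K B C) \<in> hom K (bip K B C) C" using D.p1_hom m by (rule D.cmp_hom)
  have ms: "cmp K m s \<in> hom K X C" using s m by (rule D.cmp_hom)
  have mf: "cmp K m f \<in> hom K A C" using f m by (rule D.cmp_hom)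
  have C2: "cmp K L8 (cmp K L7 (cmp K L6 (cmp K L5 (cmp K L4 (cmp K L3 N2))))) = col K B C (p1 K B C) (cmp K m (p1 K B C))"
    unfolding L3_def L4_def L5_def L6_def L7_def L8_def N2_def
    using D.chain[OF m k D.p1_hom D.p2_hom D.zero_hom] D.cmp_zero_right[OF k] D.add_zero[OF mp] by simp
  have C3: "cmp K L8 (cmp K L7 (cmp K L6 (cmp K L5 (cmp K L4 (cmp K L3 x2))))) = col K B C s (cmp K m s)"
    unfolding L3_def L4_def L5_def L6_def L7_def L8_def x2_def
    using D.chain[OF m k s t D.zero_hom] D.cmp_zero_right[OF k] D.add_zero[OF ms] by simp
  have E1: "col K B C f (add K (cmp K m f) k) = col K B C f g"
    and E2: "add K (dsum K B B C C (zero K B B) \<eta>)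
       (cmp K (cmp K (col K B C (p1 K B C) (cmp K m (p1 K B C))) S) (dag K (col K B C (p1 K B C) (cmp K m (p1 K B C))))) = S"
    and E3: "add K (col K B C (zero K X B) u) (col K B C s (cmp K m s)) = col K B C s t"
    using cd unfolding C1 C2 C3 by simp_all
  have r1: "add K (cmp K m f) k = g" using D.col_eq(2)[OF f D.add_hom[OF mf k] f g E1] .
  have k_eq: "k = sub K g (cmp K m f)" unfolding sub_def using D.add_solve[OF mf k r1] .
  have "col K B C (add K (zero K X B) s) (add K u (cmp K m s)) = col K B C s t"
    using E3 D.col_add[OF D.zero_hom u s ms] by simp
  then have "add K u (cmp K m s) = t" using D.col_eq(2)[OF D.add_hom[OF D.zero_hom s] D.add_hom[OF u ms] s t] by blast
  then have "add K (cmp K m s) u = t" using D.add_comm[OF u ms] by simp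
  then have u_eq: "u = sub K t (cmp K m s)" unfolding sub_def using D.add_solve[OF ms u] by blast
  have ma: "cmp K m \<alpha> \<in> hom K B C" using \<alpha> m by (rule D.cmp_hom)
  have am: "cmp K \<alpha> (dag K m) \<in> hom K C B" using D.dag_hom[OF m] \<alpha> by (rule D.cmp_hom)
  have mam: "cmp K m (cmp K \<alpha> (dag K m)) \<in> hom K C C" using am m by (rule D.cmp_hom)
  have "mat2 K B C B C (add K (zero K B B) \<alpha>) (add K (zero K C B) (cmp K \<alpha> (dag K m)))
      (add K (zero K B C) (cmp K m \<alpha>)) (add K \<eta> (cmp K m (cmp K \<alpha> (dag K m)))) = S"
    using E2 unfolding D.NPN[OF m \<alpha> \<beta> gb \<delta>, folded S_def] dsum_def
    using D.mat2_add[OF D.zero_hom D.zero_hom D.zero_hom \<eta> \<alpha> am ma mam] by simp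
  then have M: "mat2 K B C B C \<alpha> (cmp K \<alpha> (dag K m)) (cmp K m \<alpha>) (add K \<eta> (cmp K m (cmp K \<alpha> (dag K m))))
       = mat2 K B C B C \<alpha> \<beta> (dag K \<beta>) \<delta>"
    unfolding S_def using D.zero_add[OF \<alpha>] D.zero_add[OF am] D.zero_add[OF ma] by simp
  note ent = D.mat2_eq[OF \<alpha> am ma D.add_hom[OF \<eta> mam] \<alpha> \<beta> gb \<delta> M]
  have "add K (cmp K m \<beta>) \<eta> = \<delta>" using ent(2,4) D.add_comm[OF \<eta> mam] by simp
  then have eta_eq: "\<eta> = sub K \<delta> (cmp K m \<beta>)" unfolding sub_def
    using D.add_solve[OF D.cmp_hom[OF \<beta> m] \<eta>] by blast
  show ?thesis using k_eq u_eq eta_eq ent(3) by blast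
qed

end
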